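(* Assume the network $\Sigma$ is well-posed, let $\mathcal{A}\subset X$ be nonempty and closed, and suppose $\Sigma$ is eISS with respect to $\mathcal{A}$ with constants $\rho\in[0,1)$, $C\ge1$ and gain $\gamma\in\mathcal{K}$, i.e. $|x(k,\xi,u)|_{\mathcal{A}}\le\max\{C\rho^k|\xi|_{\mathcal{A}},\gamma(\|u\|_\infty)\}$ for all $\xi\in X$, $u\in\mathcal{U}$, $k\in\mathbb{N}_0$. Then for any function $V:X\to[0,\infty)$ and constants $\underline w,\overline w,b>0$ satisfying $\underline w|\xi|_{\mathcal{A}}^b\le V(\xi)\le\overline w|\xi|_{\mathcal{A}}^b$ for all $\xi\in X$, and for every $\kappa\in(0,1)$, there exists $M\in\mathbb{N}$ such that $V(x(M,\xi,u))\le\max\{\kappa V(\xi),\overline w\,\gamma(\|u\|_\infty)^b\}$ for all $\xi\in X$ and all $u\in\mathcal{U}$. In particular, one can choose any $M\in\mathbb{N}$ satisfying $M\ge\frac1b\log_\rho\big(\frac{\kappa\underline w}{C^b\overline w}\big)$, and $V$ is an exponential $M$-step ISS Lyapunov function for $\Sigma$.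
   Context: Setting: for each $i\in\mathbb{N}$ fix positive integers $n_i,p_i$, norms on $\mathbb{R}^{n_i},\mathbb{R}^{p_i}$, a finite $I_i\subset\mathbb{N}\setminus\{i\}$ with each $\{j: i\in I_j\}$ finite, and continuous $f_i:\mathbb{R}^{n_i}\times\prod_{j\in I_i}\mathbb{R}^{n_j}\times\mathbb{R}^{p_i}\to\mathbb{R}^{n_i}$. $X$ (resp. $U$) is the space of sequences $(x_i)$, $x_i\in\mathbb{R}^{n_i}$ (resp. $(u_i)$, $u_i\in\mathbb{R}^{p_i}$) with finite sup-norm $|\cdot|_\infty$; $f(x,u)_i=f_i(x_i,(x_j)_{j\in I_i},u_i)$; network $\Sigma$: $x(k+1)=f(x(k),u(k))$; well-posed means $f(X\times U)\subset X$. $\mathcal{U}$: sequences $u:\mathbb{N}_0\to U$ with $\|u\|_\infty=\sup_k|u(k)|_\infty<\infty$; $x(k,\xi,u)$ the solution with $x(0)=\xi$. $|x|_{\mathcal{A}}=\inf_{y\in\mathcal{A}}|x-y|_\infty$. An exponential (eISS) $M$-step ISS Lyapunov function is a function $V$ with $\underline w|\xi|_{\mathcal{A}}^b\le V(\xi)\le\overline w|\xi|_{\mathcal{A}}^b$ and $V(x(M,\xi,u))\le\max\{\kappa V(\xi),\tilde\gamma(\|u\|_\infty)\}$ for some $\kappa\in[0,1)$, $\tilde\gamma\in\mathcal{K}$, all $\xi\in X,u\in\mathcal{U}$. $\mathcal{K}$ denotes continuous strictly increasing functions $[0,\infty)\to[0,\infty)$ vanishing at $0$. *)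

theory Defs
  imports "HOL-Analysis.Analysis"
begin

text \<open>
  A vector of R^m is a function nat => real vanishing at all indices >= m.
  A network state (resp. input) is a sequence of such vectors: nat => nat => real,
  where x i is the i-th component x_i in R^(n i) (resp. u_i in R^(p i)).
\<close>

type_synonym vec = "nat \<Rightarrow> real"
type_synonym seqv = "nat \<Rightarrow> nat \<Rightarrow> real"

definition Vec :: "nat \<Rightarrow> vec set" where
  "Vec m = {v. \<forall>j\<ge>m. v j = 0}"

definition is_norm_on :: "nat \<Rightarrow> (vec \<Rightarrow> real) \<Rightarrow> bool" where
  "is_norm_on m N \<longleftrightarrow>
     (\<forall>v\<in>Vec m. 0 \<le> N v \<and> (N v = 0 \<longleftrightarrow> v = (\<lambda>j. 0))) \<and>
     (\<forall>v\<in>Vec m. \<forall>c::real. N (\<lambda>j. c * v j) = \<bar>c\<bar> * N v) \<and>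
     (\<forall>v\<in>Vec m. \<forall>w\<in>Vec m. N (\<lambda>j. v j + w j) \<le> N v + N w)"

definition supnorm :: "(nat \<Rightarrow> vec \<Rightarrow> real) \<Rightarrow> seqv \<Rightarrow> real" where
  "supnorm N x = (SUP i. N i (x i))"

definition seqspace :: "(nat \<Rightarrow> nat) \<Rightarrow> (nat \<Rightarrow> vec \<Rightarrow> real) \<Rightarrow> seqv set" where
  "seqspace d N = {x. (\<forall>i. x i \<in> Vec (d i)) \<and> bdd_above (range (\<lambda>i. N i (x i)))}"

definition allseq :: "(nat \<Rightarrow> nat) \<Rightarrow> seqv set" where
  "allseq d = {x. \<forall>i. x i \<in> Vec (d i)}"

text \<open>F i x u represents f_i(x_i, (x_j)_{j in I_i}, u_i): it only depends on these
  arguments, and is continuous (in the finitely many relevant coordinates, i.e.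
  w.r.t. the product topology).\<close>
definition network_data ::
  "(nat \<Rightarrow> nat) \<Rightarrow> (nat \<Rightarrow> nat) \<Rightarrow> (nat \<Rightarrow> vec \<Rightarrow> real) \<Rightarrow> (nat \<Rightarrow> vec \<Rightarrow> real)
   \<Rightarrow> (nat \<Rightarrow> nat set) \<Rightarrow> (nat \<Rightarrow> seqv \<Rightarrow> seqv \<Rightarrow> vec) \<Rightarrow> bool" where
  "network_data n p Nx Nu I F \<longleftrightarrow>
     (\<forall>i. 0 < n i \<and> 0 < p i) \<and>
     (\<forall>i. is_norm_on (n i) (Nx i) \<and> is_norm_on (p i) (Nu i)) \<and>
     (\<forall>i. finite (I i) \<and> i \<notin> I i \<and> finite {j. i \<in> I j}) \<and>
     (\<forall>i x x' u u'. x i = x' i \<and> (\<forall>j\<in>I i. x j = x' j) \<and> u i = u' i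
         \<longrightarrow> F i x u = F i x' u') \<and>
     (\<forall>i. \<forall>x\<in>allseq n. \<forall>u\<in>allseq p. F i x u \<in> Vec (n i)) \<and>
     (\<forall>i. continuous_on (allseq n \<times> allseq p) (\<lambda>(x, u). F i x u))"

definition netmap :: "(nat \<Rightarrow> seqv \<Rightarrow> seqv \<Rightarrow> vec) \<Rightarrow> seqv \<Rightarrow> seqv \<Rightarrow> seqv" where
  "netmap F x u = (\<lambda>i. F i x u)"

definition well_posed ::
  "(nat \<Rightarrow> nat) \<Rightarrow> (nat \<Rightarrow> nat) \<Rightarrow> (nat \<Rightarrow> vec \<Rightarrow> real) \<Rightarrow> (nat \<Rightarrow> vec \<Rightarrow> real)
   \<Rightarrow> (nat \<Rightarrow> seqv \<Rightarrow> seqv \<Rightarrow> vec) \<Rightarrow> bool" where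
  "well_posed n p Nx Nu F \<longleftrightarrow>
     (\<forall>x\<in>seqspace n Nx. \<forall>u\<in>seqspace p Nu. netmap F x u \<in> seqspace n Nx)"

definition inputs :: "(nat \<Rightarrow> nat) \<Rightarrow> (nat \<Rightarrow> vec \<Rightarrow> real) \<Rightarrow> (nat \<Rightarrow> seqv) set" where
  "inputs p Nu = {u. (\<forall>k. u k \<in> seqspace p Nu) \<and> bdd_above (range (\<lambda>k. supnorm Nu (u k)))}"

definition inorm :: "(nat \<Rightarrow> vec \<Rightarrow> real) \<Rightarrow> (nat \<Rightarrow> seqv) \<Rightarrow> real" where
  "inorm Nu u = (SUP k. supnorm Nu (u k))"

primrec traj :: "(nat \<Rightarrow> seqv \<Rightarrow> seqv \<Rightarrow> vec) \<Rightarrow> seqv \<Rightarrow> (nat \<Rightarrow> seqv) \<Rightarrow> nat \<Rightarrow> seqv" where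
  "traj F \<xi> u 0 = \<xi>"
| "traj F \<xi> u (Suc k) = netmap F (traj F \<xi> u k) (u k)"

definition distA :: "(nat \<Rightarrow> vec \<Rightarrow> real) \<Rightarrow> seqv set \<Rightarrow> seqv \<Rightarrow> real" where
  "distA N A x = (INF y\<in>A. supnorm N (\<lambda>i j. x i j - y i j))"

definition closed_in_X :: "(nat \<Rightarrow> nat) \<Rightarrow> (nat \<Rightarrow> vec \<Rightarrow> real) \<Rightarrow> seqv set \<Rightarrow> bool" where
  "closed_in_X n N A \<longleftrightarrow>
     (\<forall>y x. (\<forall>k. y k \<in> A) \<and> x \<in> seqspace n N \<and>
        ((\<lambda>k. supnorm N (\<lambda>i j. y k i j - x i j)) \<longlonglongrightarrow> 0) \<longrightarrow> x \<in> A)"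

definition classK :: "(real \<Rightarrow> real) \<Rightarrow> bool" where
  "classK g \<longleftrightarrow> continuous_on {0..} g \<and> strict_mono_on {0..} g \<and> g 0 = 0"

definition eISS_Lyapunov ::
  "(nat \<Rightarrow> nat) \<Rightarrow> (nat \<Rightarrow> nat) \<Rightarrow> (nat \<Rightarrow> vec \<Rightarrow> real) \<Rightarrow> (nat \<Rightarrow> vec \<Rightarrow> real)
   \<Rightarrow> (nat \<Rightarrow> seqv \<Rightarrow> seqv \<Rightarrow> vec) \<Rightarrow> seqv set \<Rightarrow> nat \<Rightarrow> (seqv \<Rightarrow> real) \<Rightarrow> bool" where
  "eISS_Lyapunov n p Nx Nu F A M V \<longleftrightarrow>
     (\<exists>wl wu b \<kappa> g. 0 < wl \<and> 0 < wu \<and> 0 < b \<and> 0 \<le> \<kappa> \<and> \<kappa> < 1 \<and> classK g \<and>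
       (\<forall>\<xi>\<in>seqspace n Nx. wl * distA Nx A \<xi> powr b \<le> V \<xi> \<and> V \<xi> \<le> wu * distA Nx A \<xi> powr b) \<and>
       (\<forall>\<xi>\<in>seqspace n Nx. \<forall>u\<in>inputs p Nu.
          V (traj F \<xi> u M) \<le> max (\<kappa> * V \<xi>) (g (inorm Nu u))))"

end

theory Submission
  imports Defs
begin

lemma supnorm_diff_nonneg:
  assumes nd: "\<forall>i. is_norm_on (n i) (Nx i)"
    and x: "x \<in> seqspace n Nx" and y: "y \<in> seqspace n Nx"
  shows "0 \<le> supnorm Nx (\<lambda>i j. x i j - y i j)"
proof -
  have vx: "\<And>i. x i \<in> Vec (n i)" and vy: "\<And>i. y i \<in> Vec (n i)"
    using x y by (auto simp: seqspace_def)
  obtain Bx where Bx: "\<And>i. Nx i (x i) \<le> Bx" using x by (auto simp: seqspace_def bdd_above_def)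
  obtain By where By: "\<And>i. Nx i (y i) \<le> By" using y by (auto simp: seqspace_def bdd_above_def)
  have vmy: "(\<lambda>j. (-1) * y i j) \<in> Vec (n i)" for i using vy[of i] by (auto simp: Vec_def)
  have dv: "(\<lambda>j. x i j - y i j) \<in> Vec (n i)" for i using vx[of i] vy[of i] by (auto simp: Vec_def)
  have bnd: "Nx i (\<lambda>j. x i j - y i j) \<le> Bx + By" for i
  proof -
    have "Nx i (\<lambda>j. x i j - y i j) = Nx i (\<lambda>j. x i j + (\<lambda>j. (-1) * y i j) j)" by simp
    also have "\<dots> \<le> Nx i (x i) + Nx i (\<lambda>j. (-1) * y i j)"
    proof -
      have tri: "\<And>v w. v \<in> Vec (n i) \<Longrightarrow> w \<in> Vec (n i) \<Longrightarrow> Nx i (\<lambda>j. v j + w j) \<le> Nx i v + Nx i w"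
        using nd unfolding is_norm_on_def by blast
      show ?thesis using tri[OF vx[of i] vmy[of i]] by simp
    qed
    also have "Nx i (\<lambda>j. (-1) * y i j) = Nx i (y i)"
      using nd vy[of i] unfolding is_norm_on_def by (metis abs_neg_one mult_1)
    finally show ?thesis using Bx[of i] By[of i] by linarith
  qed
  have nn: "0 \<le> Nx i (\<lambda>j. x i j - y i j)" for i
    using nd dv[of i] unfolding is_norm_on_def by blast
  have "bdd_above (range (\<lambda>i. Nx i (\<lambda>j. x i j - y i j)))"
    using bnd by (auto simp: bdd_above_def)
  hence "Nx 0 (\<lambda>j. x 0 j - y 0 j) \<le> supnorm Nx (\<lambda>i j. x i j - y i j)"
    unfolding supnorm_def by (rule cSUP_upper[OF UNIV_I])
  thus ?thesis using nn[of 0] by linarith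
qed

lemma distA_nonneg:
  assumes nd: "\<forall>i. is_norm_on (n i) (Nx i)"
    and A_sub: "A \<subseteq> seqspace n Nx" and A_ne: "A \<noteq> {}" and x: "x \<in> seqspace n Nx"
  shows "0 \<le> distA Nx A x"
  unfolding distA_def
  by (rule cINF_greatest[OF A_ne]) (use supnorm_diff_nonneg[OF nd x] A_sub in auto)

lemma key_ineq:
  fixes d dM VM V0 g C \<rho> wl wu b \<kappa> :: real and M :: nat
  assumes "0 \<le> d" "0 \<le> dM" "dM \<le> max (C * \<rho> ^ M * d) g"
    and "wu * (C * \<rho> ^ M) powr b \<le> \<kappa> * wl" "0 \<le> C" "0 \<le> \<rho>"
    and "VM \<le> wu * dM powr b" "wl * d powr b \<le> V0" "0 < wu" "0 < b" "0 < \<kappa>"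
  shows "VM \<le> max (\<kappa> * V0) (wu * g powr b)"
proof (cases "dM \<le> C * \<rho> ^ M * d")
  case True
  have "VM \<le> wu * (C * \<rho> ^ M * d) powr b"
    using assms True by (meson order_trans mult_left_mono powr_mono2 less_imp_le)
  also have "\<dots> = wu * (C * \<rho> ^ M) powr b * d powr b"
    using assms by (simp add: powr_mult)
  also have "\<dots> \<le> \<kappa> * wl * d powr b"
    using assms by (intro mult_right_mono) auto
  also have "\<dots> \<le> \<kappa> * V0" using assms by (simp add: mult.assoc)
  finally show ?thesis by simp
next
  case False
  hence "dM \<le> g" using assms by linarith
  hence "VM \<le> wu * g powr b"
    using assms by (meson order_trans mult_left_mono powr_mono2 less_imp_le)
  thus ?thesis by simp
qed

lemma cond_M:
  fixes C \<rho> wl wu b \<kappa> :: real and M :: nat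
  assumes "0 \<le> \<rho>" "\<rho> < 1" "1 \<le> C" "0 < wl" "0 < wu" "0 < b" "0 < \<kappa>" "1 \<le> M"
    and "real M \<ge> (1 / b) * log \<rho> (\<kappa> * wl / (C powr b * wu))"
  shows "wu * (C * \<rho> ^ M) powr b \<le> \<kappa> * wl"
proof (cases "\<rho> = 0")
  case True
  thus ?thesis using assms by (simp add: power_0_left)
next
  case False
  hence rp: "0 < \<rho>" using assms by simp
  define q where "q = \<kappa> * wl / (C powr b * wu)"
  have qp: "0 < q" using assms by (simp add: q_def)
  have lr: "ln \<rho> < 0" using rp assms by simp
  have blr: "b * ln \<rho> < 0" using lr assms(6) by (simp add: mult_pos_neg)
  have "ln q / (b * ln \<rho>) \<le> real M"
    using assms(9) unfolding q_def[symmetric] log_def by simp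
  hence "real M * (b * ln \<rho>) \<le> ln q"
    using blr by (simp add: divide_le_eq)
  hence "real M * b * ln \<rho> \<le> ln q" by (simp add: mult.assoc)
  hence "exp (real M * b * ln \<rho>) \<le> exp (ln q)" by simp
  hence r1: "\<rho> powr (real M * b) \<le> q" using rp qp by (simp add: powr_def mult.commute)
  have "(C * \<rho> ^ M) powr b = C powr b * \<rho> powr (real M * b)"
    using rp assms by (simp add: powr_mult powr_powr powr_realpow[symmetric])
  also have "\<dots> \<le> C powr b * q" using r1 assms by (intro mult_left_mono) auto
  finally have "wu * (C * \<rho> ^ M) powr b \<le> wu * (C powr b * q)"
    using assms by (intro mult_left_mono) auto
  also have "\<dots> = \<kappa> * wl" using assms by (simp add: q_def)
  finally show ?thesis .
qed

theorem proposition3: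
  fixes n p :: "nat \<Rightarrow> nat" and Nx Nu :: "nat \<Rightarrow> vec \<Rightarrow> real"
    and I :: "nat \<Rightarrow> nat set" and F :: "nat \<Rightarrow> seqv \<Rightarrow> seqv \<Rightarrow> vec"
    and A :: "seqv set" and \<rho> C :: real and \<gamma> :: "real \<Rightarrow> real"
    and V :: "seqv \<Rightarrow> real" and wl wu b \<kappa> :: real
  assumes net: "network_data n p Nx Nu I F"
    and wp: "well_posed n p Nx Nu F"
    and A_sub: "A \<subseteq> seqspace n Nx" and A_ne: "A \<noteq> {}" and A_closed: "closed_in_X n Nx A"
    and rho: "0 \<le> \<rho>" "\<rho> < 1" and C: "1 \<le> C" and gamma: "classK \<gamma>"
    and eISS: "\<forall>\<xi>\<in>seqspace n Nx. \<forall>u\<in>inputs p Nu. \<forall>k.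
                 distA Nx A (traj F \<xi> u k) \<le> max (C * \<rho> ^ k * distA Nx A \<xi>) (\<gamma> (inorm Nu u))"
    and V_nonneg: "\<forall>\<xi>\<in>seqspace n Nx. 0 \<le> V \<xi>"
    and w: "0 < wl" "0 < wu" "0 < b"
    and V_bounds: "\<forall>\<xi>\<in>seqspace n Nx.
                     wl * distA Nx A \<xi> powr b \<le> V \<xi> \<and> V \<xi> \<le> wu * distA Nx A \<xi> powr b"
    and kappa: "0 < \<kappa>" "\<kappa> < 1"
  shows "(\<exists>M::nat. 1 \<le> M \<and>
            (\<forall>\<xi>\<in>seqspace n Nx. \<forall>u\<in>inputs p Nu.
               V (traj F \<xi> u M) \<le> max (\<kappa> * V \<xi>) (wu * \<gamma> (inorm Nu u) powr b)))
      \<and> (\<forall>M::nat. 1 \<le> M \<and> real M \<ge> (1 / b) * log \<rho> (\<kappa> * wl / (C powr b * wu)) \<longrightarrow>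
            (\<forall>\<xi>\<in>seqspace n Nx. \<forall>u\<in>inputs p Nu.
               V (traj F \<xi> u M) \<le> max (\<kappa> * V \<xi>) (wu * \<gamma> (inorm Nu u) powr b))
            \<and> eISS_Lyapunov n p Nx Nu F A M V)"
proof -
  have nd: "\<forall>i. is_norm_on (n i) (Nx i)" using net by (simp add: network_data_def)
  have traj_in: "traj F \<xi> u k \<in> seqspace n Nx" if "\<xi> \<in> seqspace n Nx" "u \<in> inputs p Nu" for \<xi> u k
    using that wp by (induction k) (auto simp: well_posed_def inputs_def)
  have main: "V (traj F \<xi> u M) \<le> max (\<kappa> * V \<xi>) (wu * \<gamma> (inorm Nu u) powr b)"
    if M: "1 \<le> M" "real M \<ge> (1 / b) * log \<rho> (\<kappa> * wl / (C powr b * wu))"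
      and xi: "\<xi> \<in> seqspace n Nx" and u: "u \<in> inputs p Nu" for M \<xi> u
  proof (rule key_ineq[where d="distA Nx A \<xi>" and dM="distA Nx A (traj F \<xi> u M)" and C=C and \<rho>=\<rho> and M=M and wl=wl])
    show "0 \<le> distA Nx A \<xi>" by (rule distA_nonneg[OF nd A_sub A_ne xi])
    show "0 \<le> distA Nx A (traj F \<xi> u M)" by (rule distA_nonneg[OF nd A_sub A_ne traj_in[OF xi u]])
    show "distA Nx A (traj F \<xi> u M) \<le> max (C * \<rho> ^ M * distA Nx A \<xi>) (\<gamma> (inorm Nu u))"
      using eISS xi u by blast
    show "wu * (C * \<rho> ^ M) powr b \<le> \<kappa> * wl"
      by (rule cond_M) (use rho C w kappa M in auto)
    show "V (traj F \<xi> u M) \<le> wu * distA Nx A (traj F \<xi> u M) powr b"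
      using V_bounds traj_in[OF xi u] by blast
    show "wl * distA Nx A \<xi> powr b \<le> V \<xi>" using V_bounds xi by blast
  qed (use C rho w kappa in auto)
  define M0 where "M0 = max 1 (nat \<lceil>(1 / b) * log \<rho> (\<kappa> * wl / (C powr b * wu))\<rceil>)"
  have M0: "1 \<le> M0" "real M0 \<ge> (1 / b) * log \<rho> (\<kappa> * wl / (C powr b * wu))"
    unfolding M0_def by (auto simp: le_max_iff_disj) linarith
  have gK: "classK (\<lambda>s. wu * \<gamma> s powr b)"
  proof -
    have g: "continuous_on {0..} \<gamma>" "strict_mono_on {0..} \<gamma>" "\<gamma> 0 = 0"
      using gamma by (auto simp: classK_def)
    have gnn: "0 \<le> \<gamma> s" if "0 \<le> s" for s
    proof (cases "s = 0")
      case False thus ?thesis using g that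
        by (metis atLeast_iff less_eq_real_def order_refl strict_mono_onD)
    qed (use g in simp)
    have c: "continuous_on {0..} (\<lambda>s. \<gamma> s powr b)"
      by (rule continuous_on_powr'[OF g(1) continuous_on_const]) (use gnn w in auto)
    have "continuous_on {0..} (\<lambda>s. wu * \<gamma> s powr b)"
      by (rule continuous_on_mult_left[OF c])
    moreover have "strict_mono_on {0..} (\<lambda>s. wu * \<gamma> s powr b)"
    proof (rule strict_mono_onI)
      fix r s :: real assume rs: "r \<in> {0..}" "s \<in> {0..}" "r < s"
      have "\<gamma> r < \<gamma> s" by (rule strict_mono_onD[OF g(2) rs])
      moreover have "0 \<le> \<gamma> r" using gnn rs by simp
      ultimately show "wu * \<gamma> r powr b < wu * \<gamma> s powr b" using w by (simp add: powr_less_mono2)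
    qed
    moreover have "wu * \<gamma> 0 powr b = 0" using g by simp
    ultimately show ?thesis by (simp add: classK_def)
  qed
  show ?thesis
  proof (intro conjI allI impI)
    show "\<exists>M::nat. 1 \<le> M \<and> (\<forall>\<xi>\<in>seqspace n Nx. \<forall>u\<in>inputs p Nu.
               V (traj F \<xi> u M) \<le> max (\<kappa> * V \<xi>) (wu * \<gamma> (inorm Nu u) powr b))"
      using main[OF M0] M0 by blast
  next
    fix M :: nat assume M: "1 \<le> M \<and> real M \<ge> (1 / b) * log \<rho> (\<kappa> * wl / (C powr b * wu))"
    show "\<forall>\<xi>\<in>seqspace n Nx. \<forall>u\<in>inputs p Nu.
               V (traj F \<xi> u M) \<le> max (\<kappa> * V \<xi>) (wu * \<gamma> (inorm Nu u) powr b)"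
      using main M by blast
    show "eISS_Lyapunov n p Nx Nu F A M V"
      unfolding eISS_Lyapunov_def
      using w kappa gK V_bounds main M
      by (intro exI[of _ wl] exI[of _ wu] exI[of _ b] exI[of _ \<kappa>]
          exI[of _ "\<lambda>s. wu * \<gamma> s powr b"]) auto
  qed
qed

end
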